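(* If $\gamma>-1/2$ and $\tau\in\mathbb{R}$, then the entire function $z\mapsto {}_1F_1(\gamma+i\tau;2\gamma+1;iz)e^{-iz/2}$ belongs to the Hermite–Biehler class.
   Context: The Hermite–Biehler class is the set of entire functions $E$ having no zeros in the upper half-plane $\{\operatorname{Im} z>0\}$ and satisfying $|E(z)|\ge|E(\bar z)|$ for $\operatorname{Im} z>0$. ${}_1F_1(\alpha;\beta;z)=\sum_{k\ge0}\frac{(\alpha)_k}{(\beta)_k}\frac{z^k}{k!}$ is the confluent hypergeometric function. *)

theory Defs
  imports "HOL-Complex_Analysis.Complex_Analysis"
begin

definition hyp1F1 :: "complex \<Rightarrow> complex \<Rightarrow> complex \<Rightarrow> complex" where
  "hyp1F1 a b z = (\<Sum>k. pochhammer a k / pochhammer b k * z ^ k / of_nat (fact k))"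

definition hermite_biehler :: "(complex \<Rightarrow> complex) \<Rightarrow> bool" where
  "hermite_biehler E \<longleftrightarrow>
     E holomorphic_on UNIV \<and>
     (\<forall>z. Im z > 0 \<longrightarrow> E z \<noteq> 0) \<and>
     (\<forall>z. Im z > 0 \<longrightarrow> norm (E z) \<ge> norm (E (cnj z)))"

end

theory Submission
  imports Defs "HOL-Real_Asymp.Real_Asymp"
begin

definition cf :: "complex \<Rightarrow> complex \<Rightarrow> nat \<Rightarrow> complex" where
  "cf b \<alpha> k = pochhammer \<alpha> k / (pochhammer b k * of_nat (fact k))"

lemma poch_nz:
  assumes "\<And>n::nat. b + of_nat n \<noteq> (0::complex)"
  shows "pochhammer b n \<noteq> 0"
proof
  assume "pochhammer b n = 0"
  then obtain k where "b = - of_nat k" by (auto simp: pochhammer_eq_0_iff)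
  then have "b + of_nat k = 0" by simp
  with assms show False by blast
qed

lemma cf_Suc:
  assumes "\<And>n::nat. b + of_nat n \<noteq> 0"
  shows "cf b \<alpha> (Suc n) = cf b \<alpha> n * ((\<alpha> + of_nat n) / ((b + of_nat n) * of_nat (Suc n)))"
proof -
  have "pochhammer b n \<noteq> 0" using assms by (rule poch_nz)
  moreover have "b + of_nat n \<noteq> 0" using assms by blast
  ultimately show ?thesis unfolding cf_def
    by (simp add: pochhammer_rec' field_simps)
qed

lemma cf_shift:
  "\<alpha> * cf b (\<alpha> + 1) n = (\<alpha> + of_nat n) * cf b \<alpha> n"
proof -
  have "\<alpha> * pochhammer (\<alpha>+1) n = pochhammer \<alpha> (Suc n)" by (simp add: pochhammer_rec)
  also have "\<dots> = (\<alpha> + of_nat n) * pochhammer \<alpha> n" by (simp add: pochhammer_rec')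
  finally show ?thesis unfolding cf_def by (simp add: field_simps)
qed

lemma cf_Suc2:
  assumes "\<And>n::nat. b + of_nat n \<noteq> 0"
  shows "cf b \<alpha> (Suc n) = \<alpha> * cf b (\<alpha>+1) n / ((b + of_nat n) * of_nat (Suc n))"
  using cf_Suc[OF assms, of \<alpha> n] cf_shift[of \<alpha> b n] by (simp add: field_simps)

definition HF :: "complex \<Rightarrow> complex \<Rightarrow> complex fps" where
  "HF b \<alpha> = Abs_fps (cf b \<alpha>)"
definition NF :: "complex \<Rightarrow> complex \<Rightarrow> complex fps" where
  "NF b \<alpha> = Abs_fps (\<lambda>k. (-1)^k * cf b \<alpha> k)"

lemma cf_XD_coeff: "of_nat n * cf b \<alpha> n = \<alpha> * (cf b (\<alpha>+1) n - cf b \<alpha> n)"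
  using cf_shift[of \<alpha> b n] by (simp add: algebra_simps)

lemma cf_XD2_coeff:
  assumes bnz: "\<And>n::nat. b + of_nat n \<noteq> 0" and bab: "b = \<alpha> + \<beta> + 1"
  shows "of_nat (Suc n) * cf b (\<alpha>+1) (Suc n) =
         \<beta> * (cf b \<alpha> (Suc n) - cf b (\<alpha>+1) (Suc n)) + cf b (\<alpha>+1) n"
proof -
  have D: "(b + of_nat n) * of_nat (Suc n) \<noteq> 0" using bnz[of n] by (simp del: of_nat_Suc)
  have e1: "cf b (\<alpha>+1) (Suc n) = cf b (\<alpha>+1) n * ((\<alpha> + 1 + of_nat n) / ((b + of_nat n) * of_nat (Suc n)))"
    by (rule cf_Suc[OF bnz])
  have e2: "cf b \<alpha> (Suc n) = \<alpha> * cf b (\<alpha>+1) n / ((b + of_nat n) * of_nat (Suc n))"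
    by (rule cf_Suc2[OF bnz])
  define X where "X = cf b (\<alpha>+1) n"
  define Dn where "Dn = (b + of_nat n) * of_nat (Suc n)"
  have key: "of_nat (Suc n) * X * (\<alpha> + 1 + of_nat n) = \<beta> * (\<alpha> * X - X * (\<alpha> + 1 + of_nat n)) + X * Dn"
    unfolding Dn_def bab by (simp add: algebra_simps)
  have "of_nat (Suc n) * (X * ((\<alpha> + 1 + of_nat n) / Dn)) = \<beta> * (\<alpha> * X / Dn - X * ((\<alpha> + 1 + of_nat n) / Dn)) + X"
    using D key unfolding Dn_def[symmetric] by (simp add: field_simps)
  then show ?thesis unfolding e1 e2 X_def Dn_def .
qed

lemma HF_XD: "fps_XD (HF b \<alpha>) = fps_const \<alpha> * (HF b (\<alpha>+1) - HF b \<alpha>)"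
  by (simp add: fps_eq_iff HF_def cf_XD_coeff)

lemma NF_XD: "fps_XD (NF b \<alpha>) = fps_const \<alpha> * (NF b (\<alpha>+1) - NF b \<alpha>)"
proof -
  have "of_nat n * ((-1)^n * cf b \<alpha> n) = \<alpha> * ((-1)^n * cf b (\<alpha>+1) n - (-1)^n * cf b \<alpha> n)" for n
  proof -
    have "(-1)^n * (of_nat n * cf b \<alpha> n) = (-1)^n * (\<alpha> * (cf b (\<alpha>+1) n - cf b \<alpha> n))"
      using cf_XD_coeff[of n b \<alpha>] by simp
    then show ?thesis by (simp add: algebra_simps)
  qed
  then show ?thesis by (simp add: fps_eq_iff NF_def)
qed

lemma HF_XD2:
  assumes bnz: "\<And>n::nat. b + of_nat n \<noteq> 0" and bab: "b = \<alpha> + \<beta> + 1"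
  shows "fps_XD (HF b (\<alpha>+1)) = fps_const \<beta> * (HF b \<alpha> - HF b (\<alpha>+1)) + fps_X * HF b (\<alpha>+1)"
proof (rule fps_ext)
  fix n show "fps_XD (HF b (\<alpha>+1)) $ n = (fps_const \<beta> * (HF b \<alpha> - HF b (\<alpha>+1)) + fps_X * HF b (\<alpha>+1)) $ n"
  proof (cases n)
    case 0 then show ?thesis by (simp add: HF_def cf_def)
  next
    case (Suc m) then show ?thesis
      using cf_XD2_coeff[OF bnz bab, of m] by (simp add: HF_def)
  qed
qed

lemma NF_XD2:
  assumes bnz: "\<And>n::nat. b + of_nat n \<noteq> 0" and bab: "b = \<alpha> + \<beta> + 1"
  shows "fps_XD (NF b (\<alpha>+1)) = fps_const \<beta> * (NF b \<alpha> - NF b (\<alpha>+1)) - fps_X * NF b (\<alpha>+1)"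
proof (rule fps_ext)
  fix n show "fps_XD (NF b (\<alpha>+1)) $ n = (fps_const \<beta> * (NF b \<alpha> - NF b (\<alpha>+1)) - fps_X * NF b (\<alpha>+1)) $ n"
  proof (cases n)
    case 0 then show ?thesis by (simp add: NF_def cf_def)
  next
    case (Suc m)
    have "of_nat (Suc m) * ((-1)^Suc m * cf b (\<alpha>+1) (Suc m)) =
         \<beta> * ((-1)^Suc m * cf b \<alpha> (Suc m) - (-1)^Suc m * cf b (\<alpha>+1) (Suc m)) - (-1)^m * cf b (\<alpha>+1) m"
    proof -
      have "(-1)^Suc m * (of_nat (Suc m) * cf b (\<alpha>+1) (Suc m)) =
         (-1)^Suc m * (\<beta> * (cf b \<alpha> (Suc m) - cf b (\<alpha>+1) (Suc m)) + cf b (\<alpha>+1) m)"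
        using cf_XD2_coeff[OF bnz bab, of m] by simp
      then show ?thesis by (simp add: algebra_simps)
    qed
    then show ?thesis using Suc by (simp add: NF_def)
  qed
qed

lemma fps_XD_diff: "fps_XD (f - g) = fps_XD f - fps_XD (g::complex fps)"
  by (simp add: fps_XD_def algebra_simps)

lemma fps_XD_exp_mult: "fps_XD (fps_exp 1 * f) = fps_X * (fps_exp 1 * f) + fps_exp 1 * fps_XD (f::complex fps)"
  by (simp add: fps_XD_def algebra_simps)

lemma uniq_sys:
  fixes d e :: "complex fps"
  assumes d0: "d $ 0 = 0" and e0: "e $ 0 = 0"
    and h1: "fps_XD d = fps_const \<alpha> * (e - d)"
    and h2: "fps_XD e = fps_const \<beta> * (d - e) + fps_X * e"
    and nz: "\<And>k::nat. k \<ge> 1 \<Longrightarrow> of_nat k + \<alpha> + \<beta> \<noteq> 0"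
  shows "d = 0 \<and> e = 0"
proof -
  have "d $ n = 0 \<and> e $ n = 0" for n
  proof (induction n)
    case 0 then show ?case using d0 e0 by simp
  next
    case (Suc n)
    define k :: complex where "k = of_nat (Suc n)"
    have a1: "k * d $ Suc n = \<alpha> * (e $ Suc n - d $ Suc n)"
      using arg_cong[OF h1, of "\<lambda>f. f $ Suc n"] unfolding k_def by simp
    have a2: "k * e $ Suc n = \<beta> * (d $ Suc n - e $ Suc n)"
      using arg_cong[OF h2, of "\<lambda>f. f $ Suc n"] Suc.IH unfolding k_def by simp
    have kz: "k \<noteq> 0" "k + \<alpha> + \<beta> \<noteq> 0" using nz[of "Suc n"] unfolding k_def
      by (simp_all del: of_nat_Suc)
    have "k * (k + \<alpha> + \<beta>) * d $ Suc n = 0"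
    proof -
      have "k * (k + \<alpha> + \<beta>) * d $ Suc n = (k + \<beta>) * (k * d $ Suc n + \<alpha> * d $ Suc n) - \<alpha> * (\<beta> * d $ Suc n)"
        by (simp add: algebra_simps)
      also have "\<dots> = (k + \<beta>) * (\<alpha> * e $ Suc n) - \<alpha> * (\<beta> * d $ Suc n)"
        using a1 by (simp add: algebra_simps)
      also have "\<dots> = \<alpha> * (k * e $ Suc n + \<beta> * e $ Suc n - \<beta> * d $ Suc n)"
        by (simp add: algebra_simps)
      also have "\<dots> = 0" using a2 by (simp add: algebra_simps)
      finally show ?thesis .
    qed
    moreover have "k * (k + \<alpha> + \<beta>) * e $ Suc n = 0"
    proof -
      have "k * (k + \<alpha> + \<beta>) * e $ Suc n = (k + \<alpha>) * (k * e $ Suc n + \<beta> * e $ Suc n) - \<beta> * (\<alpha> * e $ Suc n)"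
        by (simp add: algebra_simps)
      also have "\<dots> = (k + \<alpha>) * (\<beta> * d $ Suc n) - \<beta> * (\<alpha> * e $ Suc n)"
        using a2 by (simp add: algebra_simps)
      also have "\<dots> = \<beta> * (k * d $ Suc n + \<alpha> * d $ Suc n - \<alpha> * e $ Suc n)"
        by (simp add: algebra_simps)
      also have "\<dots> = 0" using a1 by (simp add: algebra_simps)
      finally show ?thesis .
    qed
    ultimately show ?case using kz by simp
  qed
  then show ?thesis by (auto simp: fps_eq_iff)
qed

lemma kummer_fps:
  assumes bnz: "\<And>n::nat. b + of_nat n \<noteq> 0" and bab: "b = \<alpha> + \<beta> + 1"
    and nz: "\<And>k::nat. k \<ge> 1 \<Longrightarrow> of_nat k + \<alpha> + \<beta> \<noteq> 0"
  shows "HF b \<alpha> = fps_exp 1 * NF b (\<beta>+1) \<and> HF b (\<alpha>+1) = fps_exp 1 * NF b \<beta>"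
proof -
  define U where "U = fps_exp 1 * NF b (\<beta>+1)"
  define V where "V = fps_exp 1 * NF b \<beta>"
  have bba: "b = \<beta> + \<alpha> + 1" using bab by simp
  have XU: "fps_XD U = fps_const \<alpha> * (V - U)"
    unfolding U_def V_def fps_XD_exp_mult NF_XD2[OF bnz bba] by (simp add: algebra_simps)
  have XV: "fps_XD V = fps_const \<beta> * (U - V) + fps_X * V"
    unfolding U_def V_def fps_XD_exp_mult NF_XD by (simp add: algebra_simps)
  have "HF b \<alpha> - U = 0 \<and> HF b (\<alpha>+1) - V = 0"
  proof (rule uniq_sys[where \<alpha>=\<alpha> and \<beta>=\<beta>])
    show "(HF b \<alpha> - U) $ 0 = 0" "(HF b (\<alpha>+1) - V) $ 0 = 0"
      by (simp_all add: U_def V_def HF_def NF_def cf_def)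
    show "fps_XD (HF b \<alpha> - U) = fps_const \<alpha> * ((HF b (\<alpha>+1) - V) - (HF b \<alpha> - U))"
      unfolding fps_XD_diff HF_XD XU by (simp add: algebra_simps)
    show "fps_XD (HF b (\<alpha>+1) - V) = fps_const \<beta> * ((HF b \<alpha> - U) - (HF b (\<alpha>+1) - V)) + fps_X * (HF b (\<alpha>+1) - V)"
      unfolding fps_XD_diff HF_XD2[OF bnz bab] XV by (simp add: algebra_simps)
  qed (rule nz)
  then show ?thesis unfolding U_def V_def by simp
qed



lemma mono_pos:
  fixes h h' :: "real \<Rightarrow> real"
  assumes der: "\<And>t. 0 < t \<Longrightarrow> t \<le> 1 \<Longrightarrow> (h has_real_derivative h' t) (at t)"
    and nn: "\<And>t. 0 < t \<Longrightarrow> t \<le> 1 \<Longrightarrow> h' t \<ge> 0"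
    and d: "\<delta> > 0" "\<And>t. 0 < t \<Longrightarrow> t < \<delta> \<Longrightarrow> h' t > 0"
    and lim: "(h \<longlongrightarrow> 0) (at_right 0)"
  shows "h 1 > 0"
proof -
  have mono: "h s \<le> h t" if "0 < s" "s \<le> t" "t \<le> 1" for s t
    by (rule DERIV_nonneg_imp_nondecreasing[OF \<open>s \<le> t\<close>]) (use that der nn in force)
  have pos: "h s \<ge> 0" if "0 < s" "s \<le> 1" for s
  proof (rule tendsto_upperbound[OF lim])
    show "\<forall>\<^sub>F x in at_right 0. h x \<le> h s"
      unfolding eventually_at_right_field using that by (intro exI[of _ s]) (auto intro: mono)
  qed simp
  define e where "e = min \<delta> 1"
  have e: "0 < e" "e \<le> 1" "e \<le> \<delta>" using d by (auto simp: e_def)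
  have "h (e/4) < h (e/2)"
  proof (rule DERIV_pos_imp_increasing[of "e/4" "e/2" h])
    fix x assume x: "e/4 \<le> x" "x \<le> e/2"
    show "\<exists>y. DERIV h x :> y \<and> y > 0"
      using x e by (intro exI[of _ "h' x"] conjI der d(2)) auto
  qed (use e in auto)
  moreover have "h (e/2) \<le> h 1" using e by (intro mono) auto
  moreover have "h (e/4) \<ge> 0" using e by (intro pos) auto
  ultimately show ?thesis by linarith
qed

lemma conv_inf:
  fixes f :: "nat \<Rightarrow> complex" and g :: "nat \<Rightarrow> real"
  assumes rec: "\<And>n. norm (f (Suc n)) \<le> norm (f n) * g n" and lim: "g \<longlonglongrightarrow> 0"
  shows "conv_radius f = \<infinity>"
proof -
  have "conv_radius f \<ge> \<infinity>"
  proof (rule conv_radius_geI_ex')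
    fix r :: real assume r: "0 < r"
    have "eventually (\<lambda>n. g n < 1 / (2*r)) sequentially"
      using lim r by (intro order_tendstoD) auto
    then obtain N where N: "\<And>n. n \<ge> N \<Longrightarrow> g n < 1/(2*r)" by (auto simp: eventually_sequentially)
    show "summable (\<lambda>n. f n * of_real r ^ n)"
    proof (rule summable_ratio_test[of "1/2" N])
      fix n assume "n \<ge> N"
      then have gn: "g n * r \<le> 1/2" using N[of n] r by (simp add: field_simps)
      have "norm (f (Suc n) * of_real r ^ Suc n) = norm (f (Suc n)) * r ^ Suc n"
        using r by (simp add: norm_mult norm_power)
      also have "\<dots> \<le> norm (f n) * g n * r ^ Suc n"
        using rec[of n] r by (intro mult_right_mono) auto
      also have "\<dots> = (g n * r) * (norm (f n) * r ^ n)" by (simp add: algebra_simps)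
      also have "\<dots> \<le> 1/2 * (norm (f n) * r ^ n)"
        using gn r by (intro mult_right_mono) auto
      also have "\<dots> = 1/2 * norm (f n * of_real r ^ n)"
        using r by (simp add: norm_mult norm_power)
      finally show "norm (f (Suc n) * of_real r ^ Suc n) \<le> 1/2 * norm (f n * of_real r ^ n)" .
    qed simp
  qed
  then show ?thesis by simp
qed



lemma bnz_real: "B > 0 \<Longrightarrow> complex_of_real B + of_nat n \<noteq> 0"
proof
  assume "B > 0" "complex_of_real B + of_nat n = 0"
  then have "Re (complex_of_real B + of_nat n) = 0" by simp
  with \<open>B > 0\<close> show False by simp
qed

lemma HF_radius:
  assumes "B > 0"
  shows "fps_conv_radius (HF (of_real B) \<alpha>) = \<infinity>"
  unfolding fps_conv_radius_def HF_def fps_nth_Abs_fps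
proof (rule conv_inf[where g="\<lambda>n. (norm \<alpha> + real n) / ((B + real n) * (real n + 1))"])
  fix n
  have nb: "norm (complex_of_real B + of_nat n) = B + n"
  proof -
    have "complex_of_real B + of_nat n = complex_of_real (B + real n)" by simp
    then show ?thesis using assms by (simp only: norm_of_real)
  qed
  have "norm (cf (of_real B) \<alpha> (Suc n)) = norm (cf (of_real B) \<alpha> n) * (norm (\<alpha> + of_nat n) / ((B + real n) * (real n + 1)))"
    unfolding cf_Suc[OF bnz_real[OF assms]] by (simp add: norm_mult norm_divide nb del: of_nat_Suc)
  also have "\<dots> \<le> norm (cf (of_real B) \<alpha> n) * ((norm \<alpha> + real n) / ((B + real n) * (real n + 1)))"
    using assms norm_triangle_ineq[of \<alpha> "of_nat n"]
    by (intro mult_left_mono divide_right_mono) auto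
  finally show "norm (cf (of_real B) \<alpha> (Suc n)) \<le> norm (cf (of_real B) \<alpha> n) * ((norm \<alpha> + real n) / ((B + real n) * (real n + 1)))" .
next
  show "(\<lambda>n. (norm \<alpha> + real n) / ((B + real n) * (real n + 1))) \<longlonglongrightarrow> 0"
    using assms by real_asymp
qed

lemma NF_radius:
  assumes "B > 0"
  shows "fps_conv_radius (NF (of_real B) \<alpha>) = \<infinity>"
proof -
  have "Abs_fps (\<lambda>n. norm (NF (of_real B) \<alpha> $ n)) = Abs_fps (\<lambda>n. norm (HF (of_real B) \<alpha> $ n))"
    by (simp add: NF_def HF_def norm_mult norm_power)
  then have "fps_conv_radius (NF (of_real B) \<alpha>) = fps_conv_radius (HF (of_real B) \<alpha>)"
    by (metis fps_conv_radius_norm)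
  then show ?thesis using HF_radius[OF assms] by simp
qed



lemma div_reorder: "x / y * z / f = x / (y * f) * (z::complex)"
  by (simp add: divide_inverse mult_ac)

lemma hyp_eval: "hyp1F1 \<alpha> b w = eval_fps (HF b \<alpha>) w"
proof -
  have "\<And>k. pochhammer \<alpha> k / pochhammer b k * w ^ k / of_nat (fact k) =
     pochhammer \<alpha> k / (pochhammer b k * of_nat (fact k)) * w ^ k"
    by (rule div_reorder)
  then show ?thesis unfolding hyp1F1_def eval_fps_def HF_def cf_def fps_nth_Abs_fps by (simp only:)
qed

lemma NF_eval: "eval_fps (NF b \<alpha>) w = hyp1F1 \<alpha> b (-w)"
proof -
  have "\<And>k. (-1)^k * (pochhammer \<alpha> k / (pochhammer b k * of_nat (fact k))) * w ^ k =
     pochhammer \<alpha> k / pochhammer b k * (-w) ^ k / of_nat (fact k)"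
  proof -
    fix k :: nat
    have "pochhammer \<alpha> k / pochhammer b k * (-w) ^ k / of_nat (fact k) =
      pochhammer \<alpha> k / (pochhammer b k * of_nat (fact k)) * (-w) ^ k" by (rule div_reorder)
    also have "\<dots> = pochhammer \<alpha> k / (pochhammer b k * of_nat (fact k)) * ((-1)^k * w ^ k)"
      by (subst power_minus) (rule refl)
    finally show "(-1)^k * (pochhammer \<alpha> k / (pochhammer b k * of_nat (fact k))) * w ^ k =
     pochhammer \<alpha> k / pochhammer b k * (-w) ^ k / of_nat (fact k)" by (simp only: ac_simps)
  qed
  then show ?thesis unfolding hyp1F1_def eval_fps_def NF_def cf_def fps_nth_Abs_fps by (simp only:)
qed

lemma eval_const_mult: "fps_conv_radius f = \<infinity> \<Longrightarrow> eval_fps (fps_const c * f) s = c * eval_fps f (s::complex)"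
  by (subst eval_fps_mult) auto

lemma eval_X_mult: "fps_conv_radius f = \<infinity> \<Longrightarrow> eval_fps (fps_X * f) s = s * eval_fps f (s::complex)"
  by (subst eval_fps_mult) auto

lemma deriv_radius: "fps_conv_radius (f::complex fps) = \<infinity> \<Longrightarrow> fps_conv_radius (fps_deriv f) = \<infinity>"
  using fps_conv_radius_deriv[of f] by simp

lemma eval_XD: "fps_conv_radius f = \<infinity> \<Longrightarrow> eval_fps (fps_XD f) s = s * eval_fps (fps_deriv f) (s::complex)"
  unfolding fps_XD_def o_def by (rule eval_X_mult[OF deriv_radius])

lemma rad_diff: "fps_conv_radius (f::complex fps) = \<infinity> \<Longrightarrow> fps_conv_radius g = \<infinity> \<Longrightarrow> fps_conv_radius (f - g) = \<infinity>"
  using fps_conv_radius_diff[of f g] by simp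



lemma rad_add: "fps_conv_radius (f::complex fps) = \<infinity> \<Longrightarrow> fps_conv_radius g = \<infinity> \<Longrightarrow> fps_conv_radius (f + g) = \<infinity>"
  using fps_conv_radius_add[of f g] by simp
lemma rad_mult: "fps_conv_radius (f::complex fps) = \<infinity> \<Longrightarrow> fps_conv_radius g = \<infinity> \<Longrightarrow> fps_conv_radius (f * g) = \<infinity>"
  using fps_conv_radius_mult[of f g] by simp

lemma rel1:
  assumes B: "B > 0"
  shows "s * eval_fps (fps_deriv (HF (of_real B) \<alpha>)) s =
     \<alpha> * (eval_fps (HF (of_real B) (\<alpha>+1)) s - eval_fps (HF (of_real B) \<alpha>) s)"
proof -
  have "eval_fps (fps_XD (HF (of_real B) \<alpha>)) s = eval_fps (fps_const \<alpha> * (HF (of_real B) (\<alpha>+1) - HF (of_real B) \<alpha>)) s"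
    by (simp only: HF_XD)
  then show ?thesis
    by (simp add: eval_XD HF_radius[OF B] eval_const_mult rad_diff eval_fps_diff)
qed

lemma rel2:
  assumes B: "B > 0" and bab: "complex_of_real B = \<alpha> + \<beta> + 1"
  shows "s * eval_fps (fps_deriv (HF (of_real B) (\<alpha>+1))) s =
     \<beta> * (eval_fps (HF (of_real B) \<alpha>) s - eval_fps (HF (of_real B) (\<alpha>+1)) s)
     + s * eval_fps (HF (of_real B) (\<alpha>+1)) s"
proof -
  have "eval_fps (fps_XD (HF (of_real B) (\<alpha>+1))) s =
    eval_fps (fps_const \<beta> * (HF (of_real B) \<alpha> - HF (of_real B) (\<alpha>+1)) + fps_X * HF (of_real B) (\<alpha>+1)) s"
    by (simp only: HF_XD2[OF bnz_real[OF B] bab])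
  then show ?thesis
    by (simp add: eval_XD HF_radius[OF B] eval_const_mult rad_diff eval_fps_diff eval_fps_add
        rad_mult eval_X_mult)
qed

lemma kummer_eval:
  assumes B: "B > 0" and bab: "complex_of_real B = \<alpha> + \<beta> + 1"
    and nz: "\<And>k::nat. k \<ge> 1 \<Longrightarrow> of_nat k + \<alpha> + \<beta> \<noteq> 0"
  shows "eval_fps (HF (of_real B) (\<alpha>+1)) s = exp s * hyp1F1 \<beta> (of_real B) (-s)"
proof -
  have "HF (of_real B) (\<alpha>+1) = fps_exp 1 * NF (of_real B) \<beta>"
    using kummer_fps[OF bnz_real[OF B] bab nz] by blast
  then have "eval_fps (HF (of_real B) (\<alpha>+1)) s = eval_fps (fps_exp 1 * NF (of_real B) \<beta>) s" by simp
  also have "\<dots> = exp s * eval_fps (NF (of_real B) \<beta>) s"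
    by (subst eval_fps_mult) (auto simp: NF_radius[OF B])
  finally show ?thesis by (simp add: NF_eval)
qed



lemma alg_id:
  fixes P Q X Y a w :: complex and t :: real
  assumes X: "X = -(of_real t*w/2)*P + a*(Q-P)" and Y: "Y = cnj a*(P-Q) + (of_real t*w/2)*Q"
  shows "P*cnj X + X*cnj P - (Q*cnj Y + Y*cnj Q) =
     - (of_real t * ((w + cnj w)/2)) * (P*cnj P + Q*cnj Q) - (a + cnj a) * (P*cnj P - Q*cnj Q)"
  unfolding X Y by (simp add: algebra_simps)

lemma re_id:
  fixes P Q X Y a w :: complex and t :: real
  assumes X: "X = -(of_real t*w/2)*P + a*(Q-P)" and Y: "Y = cnj a*(P-Q) + (of_real t*w/2)*Q"
  shows "Re (P*cnj X + X*cnj P - (Q*cnj Y + Y*cnj Q)) =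
     - (t * Re w) * ((cmod P)^2 + (cmod Q)^2) - (2 * Re a) * ((cmod P)^2 - (cmod Q)^2)"
proof -
  have w: "(w + cnj w)/2 = of_real (Re w)" using complex_add_cnj[of w] by simp
  have a: "a + cnj a = of_real (2 * Re a)" using complex_add_cnj[of a] by simp
  have n: "z * cnj z = of_real ((cmod z)^2)" for z by (simp add: complex_mult_cnj cmod_power2)
  show ?thesis unfolding alg_id[OF X Y] w a n
    by (simp only: of_real_mult[symmetric] of_real_add[symmetric] of_real_diff[symmetric]
         of_real_minus[symmetric] Re_complex_of_real)
qed



lemma energy:
  assumes B: "B > 0" and Ba: "B = 2 * Re a + 1" and w: "Re w < 0"
  shows "norm (exp (-w/2) * eval_fps (HF (of_real B) (a+1)) w) < norm (exp (-w/2) * eval_fps (HF (of_real B) a) w)"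
proof -
  define M where "M \<alpha> s = eval_fps (HF (of_real B) \<alpha>) s" for \<alpha> s
  define M' where "M' \<alpha> s = eval_fps (fps_deriv (HF (of_real B) \<alpha>)) s" for \<alpha> s
  have dM: "(M \<alpha> has_field_derivative M' \<alpha> s) (at s)" for \<alpha> s
    unfolding M_def M'_def by (rule has_field_derivative_eval_fps) (simp add: HF_radius[OF B])
  have bab: "complex_of_real B = a + cnj a + 1" using Ba complex_add_cnj[of a] by simp
  have r1: "s * M' a s = a * (M (a+1) s - M a s)" for s using rel1[OF B] unfolding M_def M'_def .
  have r2: "s * M' (a+1) s = cnj a * (M a s - M (a+1) s) + s * M (a+1) s" for s
    using rel2[OF B bab] unfolding M_def M'_def .
  have M0: "M \<alpha> 0 = 1" for \<alpha> unfolding M_def by (simp add: eval_fps_at_0 HF_def cf_def)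
  define F where "F s = exp (-(s*w)/2) * M a (s*w)" for s
  define G where "G s = exp (-(s*w)/2) * M (a+1) (s*w)" for s
  define F' where "F' s = -(w/2) * F s + exp (-(s*w)/2) * (w * M' a (s*w))" for s
  define G' where "G' s = -(w/2) * G s + exp (-(s*w)/2) * (w * M' (a+1) (s*w))" for s
  have dexp: "((\<lambda>s. exp (-(s*w)/2)) has_field_derivative exp (-(s*w)/2) * (-(w/2))) (at s)" for s
    by (auto intro!: derivative_eq_intros)
  have dF: "(F has_field_derivative F' s) (at s)" for s
  proof -
    have "((\<lambda>s. M a (s*w)) has_field_derivative M' a (s*w) * w) (at s)"
      by (rule DERIV_chain2[OF dM]) (auto intro!: derivative_eq_intros)
    from DERIV_mult[OF dexp this] show ?thesis
      unfolding F_def[abs_def] by (rule DERIV_cong) (simp add: F'_def F_def algebra_simps)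
  qed
  have dG: "(G has_field_derivative G' s) (at s)" for s
  proof -
    have "((\<lambda>s. M (a+1) (s*w)) has_field_derivative M' (a+1) (s*w) * w) (at s)"
      by (rule DERIV_chain2[OF dM]) (auto intro!: derivative_eq_intros)
    from DERIV_mult[OF dexp this] show ?thesis
      unfolding G_def[abs_def] by (rule DERIV_cong) (simp add: G'_def G_def algebra_simps)
  qed
  have kF: "s * F' s = -(s*w/2) * F s + a * (G s - F s)" for s
  proof -
    have "s * F' s = -(s*w/2) * F s + exp (-(s*w)/2) * ((s*w) * M' a (s*w))"
      by (simp add: F'_def algebra_simps)
    also have "\<dots> = -(s*w/2) * F s + a * (G s - F s)"
      unfolding r1 by (simp add: F_def G_def algebra_simps)
    finally show ?thesis .
  qed
  have kG: "s * G' s = cnj a * (F s - G s) + (s*w/2) * G s" for s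
  proof -
    have "s * G' s = -(s*w/2) * G s + exp (-(s*w)/2) * ((s*w) * M' (a+1) (s*w))"
      by (simp add: G'_def algebra_simps)
    also have "\<dots> = cnj a * (F s - G s) + (s*w/2) * G s"
      unfolding r2 by (simp add: F_def G_def algebra_simps)
    finally show ?thesis .
  qed
  define \<phi> where "\<phi> t = Re (F (of_real t) * cnj (F (of_real t)) - G (of_real t) * cnj (G (of_real t)))" for t
  define \<phi>' where "\<phi>' t = Re (F (of_real t) * cnj (F' (of_real t)) + F' (of_real t) * cnj (F (of_real t))
      - (G (of_real t) * cnj (G' (of_real t)) + G' (of_real t) * cnj (G (of_real t))))" for t
  have d\<phi>: "(\<phi> has_real_derivative \<phi>' t) (at t)" for t
    unfolding \<phi>_def[abs_def] \<phi>'_def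
    by (intro derivative_intros has_vector_derivative_real_field dF dG)
  have \<phi>n: "\<phi> t = (cmod (F (of_real t)))^2 - (cmod (G (of_real t)))^2" for t
    by (simp add: \<phi>_def complex_mult_cnj cmod_power2)
  have key: "t * \<phi>' t = - (t * Re w) * ((cmod (F (of_real t)))^2 + (cmod (G (of_real t)))^2) - (B - 1) * \<phi> t" for t
  proof -
    let ?P = "F (of_real t)" and ?Q = "G (of_real t)"
    have X: "of_real t * F' (of_real t) = -(of_real t*w/2)*?P + a*(?Q-?P)" using kF[of "of_real t"] by simp
    have Y: "of_real t * G' (of_real t) = cnj a*(?P-?Q) + (of_real t*w/2)*?Q" using kG[of "of_real t"] by simp
    have "t * \<phi>' t = Re (?P * cnj (of_real t * F' (of_real t)) + (of_real t * F' (of_real t)) * cnj ?P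
        - (?Q * cnj (of_real t * G' (of_real t)) + (of_real t * G' (of_real t)) * cnj ?Q))"
      unfolding \<phi>'_def by (simp add: algebra_simps)
    also have "\<dots> = - (t * Re w) * ((cmod ?P)^2 + (cmod ?Q)^2) - (2 * Re a) * ((cmod ?P)^2 - (cmod ?Q)^2)"
      by (rule re_id[OF X Y])
    finally show ?thesis unfolding \<phi>n Ba by simp
  qed
  define N where "N t = (cmod (F (of_real t)))^2 + (cmod (G (of_real t)))^2" for t
  define h where "h t = t powr (B-1) * \<phi> t" for t
  define h' where "h' t = t powr (B-1) * (- Re w) * N t" for t
  have dh: "(h has_real_derivative h' t) (at t)" if t: "0 < t" "t \<le> 1" for t
  proof -
    have dp: "((\<lambda>t. t powr (B-1)) has_real_derivative t powr (B-1) * (0 * ln t + 1 * (B-1) / t)) (at t)"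
      by (rule DERIV_powr[OF DERIV_ident _ DERIV_const]) (use t in simp)
    have e: "(B-1) * \<phi> t + t * \<phi>' t = -(t * Re w) * N t" using key[of t] unfolding N_def by simp
    from DERIV_mult[OF dp d\<phi>] show ?thesis unfolding h_def[abs_def]
    proof (rule DERIV_cong)
      have "t powr (B - 1) * (0 * ln t + 1 * (B - 1) / t) * \<phi> t + \<phi>' t * t powr (B - 1)
          = t powr (B-1) * (((B-1) * \<phi> t + t * \<phi>' t) / t)" using t by (simp add: field_simps)
      also have "\<dots> = h' t" unfolding e h'_def using t by simp
      finally show "t powr (B - 1) * (0 * ln t + 1 * (B - 1) / t) * \<phi> t + \<phi>' t * t powr (B - 1) = h' t" .
    qed
  qed
  have nn: "h' t \<ge> 0" if "0 < t" "t \<le> 1" for t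
    unfolding h'_def N_def using w by (intro mult_nonneg_nonneg) auto
  have F0: "F 0 = 1" by (simp add: F_def M0)
  have G0: "G 0 = 1" by (simp add: G_def M0)
  have "isCont F 0" by (rule DERIV_isCont[OF dF])
  then obtain d where d: "d > 0" "\<And>s. dist s 0 < d \<Longrightarrow> dist (F s) (F 0) < 1"
    unfolding continuous_at_eps_delta by (meson zero_less_one)
  have pos: "h' t > 0" if t: "0 < t" "t < d" for t
  proof -
    have "dist (F (of_real t)) 1 < 1" using d(2)[of "of_real t"] t F0 by simp
    then have "F (of_real t) \<noteq> 0" by auto
    then have "N t > 0" unfolding N_def by (intro add_pos_nonneg) auto
    then show ?thesis unfolding h'_def using t w by (intro mult_pos_pos) auto
  qed
  have \<phi>0: "\<phi> 0 = 0" by (simp add: \<phi>_def F0 G0)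
  have lim: "(h \<longlongrightarrow> 0) (at_right 0)"
  proof -
    have "((\<lambda>y. (\<phi> y - \<phi> 0) / (y - 0)) \<longlongrightarrow> \<phi>' 0) (at 0)"
      using d\<phi>[of 0] by (simp add: has_field_derivative_iff)
    then have l1: "((\<lambda>y. \<phi> y / y) \<longlongrightarrow> \<phi>' 0) (at_right 0)"
      unfolding \<phi>0 by (simp add: filterlim_at_split)
    have l2: "((\<lambda>y. y powr B) \<longlongrightarrow> 0) (at_right 0)"
      by (rule tendsto_zero_powrI) (use B in \<open>auto intro: tendsto_ident_at eventually_at_rightI[of 0 1]\<close>)
    have "((\<lambda>y. y powr B * (\<phi> y / y)) \<longlongrightarrow> 0 * \<phi>' 0) (at_right 0)"
      by (rule tendsto_mult[OF l2 l1])
    then have l3: "((\<lambda>y. y powr B * (\<phi> y / y)) \<longlongrightarrow> 0) (at_right 0)" by simp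
    show ?thesis
    proof (rule Lim_transform_eventually[OF l3])
      show "\<forall>\<^sub>F x in at_right 0. x powr B * (\<phi> x / x) = h x"
      proof (rule eventually_at_rightI[of 0 1])
        fix x :: real assume x: "x \<in> {0<..<1}"
        have "x powr B = x powr (B-1) * x" using x by (simp add: powr_diff)
        then show "x powr B * (\<phi> x / x) = h x" unfolding h_def using x by simp
      qed simp
    qed
  qed
  have "h 1 > 0" by (rule mono_pos[of h h' d, OF dh nn d(1) pos lim])
  then have "\<phi> 1 > 0" unfolding h_def by simp
  then have "(cmod (G 1))^2 < (cmod (F 1))^2" unfolding \<phi>n by simp
  then have "cmod (G 1) < cmod (F 1)" by (rule power_less_imp_less_base) simp
  then show ?thesis unfolding F_def G_def M_def by simp
qed



lemma hyp_cnj: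
  assumes B: "B > 0"
  shows "cnj (hyp1F1 \<alpha> (of_real B) x) = hyp1F1 (cnj \<alpha>) (of_real B) (cnj x)"
proof -
  have "(\<lambda>n. HF (of_real B) \<alpha> $ n * x ^ n) sums eval_fps (HF (of_real B) \<alpha>) x"
    by (rule sums_eval_fps) (simp add: HF_radius[OF B])
  moreover have "\<And>n. HF (of_real B) \<alpha> $ n * x ^ n = pochhammer \<alpha> n / pochhammer (of_real B) n * x ^ n / of_nat (fact n)"
    unfolding HF_def cf_def fps_nth_Abs_fps by (rule div_reorder[symmetric])
  ultimately have "(\<lambda>n. pochhammer \<alpha> n / pochhammer (of_real B) n * x ^ n / of_nat (fact n)) sums hyp1F1 \<alpha> (of_real B) x"
    by (simp add: hyp_eval)
  then have "(\<lambda>n. cnj (pochhammer \<alpha> n / pochhammer (of_real B) n * x ^ n / of_nat (fact n))) sums cnj (hyp1F1 \<alpha> (of_real B) x)"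
    by (simp only: sums_cnj)
  then have "(\<lambda>n. pochhammer (cnj \<alpha>) n / pochhammer (of_real B) n * cnj x ^ n / of_nat (fact n)) sums cnj (hyp1F1 \<alpha> (of_real B) x)"
    by simp
  then show ?thesis unfolding hyp1F1_def by (simp add: sums_iff)
qed

theorem corollary2p6:
  fixes \<gamma> \<tau> :: real
  assumes "\<gamma> > -1/2"
  shows "hermite_biehler
           (\<lambda>z. hyp1F1 (complex_of_real \<gamma> + \<i> * complex_of_real \<tau>)
                        (complex_of_real (2 * \<gamma> + 1)) (\<i> * z)
                 * exp (- \<i> * z / 2))"
proof -
  define a where "a = complex_of_real \<gamma> + \<i> * complex_of_real \<tau>"
  define B where "B = 2 * \<gamma> + 1"
  have B: "B > 0" using assms by (simp add: B_def)
  have Ra: "Re a = \<gamma>" by (simp add: a_def)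
  have Ba: "B = 2 * Re a + 1" by (simp add: B_def Ra)
  have bab: "complex_of_real B = a + cnj a + 1" using Ba complex_add_cnj[of a] by simp
  have nz: "of_nat k + a + cnj a \<noteq> 0" if "k \<ge> 1" for k :: nat
  proof
    assume "of_nat k + a + cnj a = 0"
    then have "Re (of_nat k + a + cnj a) = 0" by simp
    then have "real k + 2 * \<gamma> = 0" by (simp add: Ra)
    with that assms show False by linarith
  qed
  define E where "E z = hyp1F1 a (complex_of_real B) (\<i> * z) * exp (- \<i> * z / 2)" for z
  have Eeq: "E = (\<lambda>z. eval_fps (HF (of_real B) a) (\<i> * z) * exp (- \<i> * z / 2))"
    by (simp add: E_def[abs_def] hyp_eval)
  have hol: "E holomorphic_on UNIV"
  proof -
    have "(eval_fps (HF (of_real B) a) \<circ> (\<lambda>z. \<i> * z)) holomorphic_on UNIV"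
      by (rule holomorphic_on_compose) (auto intro!: holomorphic_intros simp: HF_radius[OF B])
    then show ?thesis unfolding Eeq o_def by (auto intro!: holomorphic_intros)
  qed
  have ineq: "norm (E (cnj z)) < norm (E z)" if z: "Im z > 0" for z
  proof -
    define w where "w = \<i> * z"
    have w: "Re w < 0" using z by (simp add: w_def)
    have en: "norm (exp (-w/2) * eval_fps (HF (of_real B) (a+1)) w) < norm (exp (-w/2) * eval_fps (HF (of_real B) a) w)"
      by (rule energy[OF B Ba w])
    have k: "eval_fps (HF (of_real B) (a+1)) w = exp w * hyp1F1 (cnj a) (of_real B) (-w)"
      by (rule kummer_eval[OF B bab nz])
    have "norm (E (cnj z)) = norm (cnj (E (cnj z)))" by simp
    also have "cnj (E (cnj z)) = hyp1F1 (cnj a) (of_real B) (-w) * exp (w/2)"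
      unfolding E_def by (simp add: hyp_cnj[OF B] exp_cnj w_def)
    also have "\<dots> = exp (-w/2) * eval_fps (HF (of_real B) (a+1)) w"
      unfolding k by (simp add: mult_ac exp_add[symmetric])
    also have "norm \<dots> < norm (exp (-w/2) * eval_fps (HF (of_real B) a) w)" by (rule en)
    also have "exp (-w/2) * eval_fps (HF (of_real B) a) w = E z"
      unfolding Eeq w_def by (simp add: mult_ac)
    finally show ?thesis .
  qed
  have "hermite_biehler E"
    unfolding hermite_biehler_def
  proof (intro conjI allI impI)
    show "E holomorphic_on UNIV" by (rule hol)
  next
    fix z :: complex assume "Im z > 0"
    from ineq[OF this] show "E z \<noteq> 0" by (metis norm_ge_zero norm_zero not_less)
  next
    fix z :: complex assume "Im z > 0"
    from ineq[OF this] show "norm (E z) \<ge> norm (E (cnj z))" by simp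
  qed
  then show ?thesis unfolding E_def[abs_def] a_def B_def .
qed


end
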